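(* For any $u\in\mathcal{L}PSH^*(\mathbb{C}^n)$, \[ 0<\frac{n}{\sigma_u}\le c_\infty(u)\le\frac{n}{\mathcal{L}_\infty(u)}\le+\infty. \] In particular, for any polynomial map $P:\mathbb{C}^n\to\mathbb{C}^q$ with $\log|P|\in\mathcal{L}PSH^*(\mathbb{C}^n)$, \[ \frac{n}{\deg P}\le c_\infty(P)\le\frac{n}{\mathcal{L}_\infty(P)}. \]
   Context: $\mathcal{L}PSH(\mathbb{C}^n)$: plurisubharmonic $u$ on $\mathbb{C}^n$ with finite logarithmic type $\sigma_u=\limsup_{|z|\to\infty}u(z)/\log|z|$; $\mathcal{L}PSH^*(\mathbb{C}^n)$: those with $u(z)\to+\infty$ as $|z|\to\infty$. $\mathcal{L}_\infty(u)=\liminf_{|z|\to\infty}u(z)/\log|z|$ (with $n/0=+\infty$). $c_\infty(u)=\inf\{c>0:\exists\text{ compact }K,\ \int_{\mathbb{C}^n\setminus K}e^{-2cu}d\lambda<\infty\}$, and $c_\infty(P)=c_\infty(\log|P|)$, $|P|$ the Euclidean norm. For a polynomial map $P=(P_1,\ldots,P_q)$, $\deg P=\max_k\deg P_k$, and $\mathcal{L}_\infty(P)$ is the Łojasiewicz exponent at infinity: the greatest real $l$ such that $|P(z)|\ge C|z|^l$ for some $C>0$ and all large $|z|$. *)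

theory Defs
  imports "HOL-Analysis.Analysis" "HOL-Library.Liminf_Limsup"
begin

text \<open>Points of C^n are vectors of type complex ^ 'n (n = CARD('n));
  Lebesgue measure on C^n = R^(2n) is lebesgue on this Euclidean space.
  Plurisubharmonic functions take values in [-infinity, +infinity), rendered as ereal
  with the value +infinity excluded.\<close>

definition circle_mean :: "(real \<Rightarrow> ereal) \<Rightarrow> ereal" where
  "circle_mean g =
     ereal (1 / (2 * pi)) *
     (enn2ereal (\<integral>\<^sup>+ \<theta>\<in>{0..2*pi}. e2ennreal (max 0 (g \<theta>)) \<partial>lborel)
      - enn2ereal (\<integral>\<^sup>+ \<theta>\<in>{0..2*pi}. e2ennreal (max 0 (- g \<theta>)) \<partial>lborel))"

definition psh :: "(complex ^ 'n \<Rightarrow> ereal) \<Rightarrow> bool" where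
  "psh u \<longleftrightarrow>
     (\<forall>z. u z \<noteq> \<infinity>) \<and>
     (\<exists>z. u z \<noteq> -\<infinity>) \<and>
     (\<forall>z. Limsup (at z) u \<le> u z) \<and>
     (\<forall>a b. u a \<le> circle_mean (\<lambda>\<theta>. u (a + cis \<theta> *s b)))"

definition log_type :: "(complex ^ 'n \<Rightarrow> ereal) \<Rightarrow> ereal" where
  "log_type u = Limsup at_infinity (\<lambda>z. u z / ereal (ln (norm z)))"

definition L_inf :: "(complex ^ 'n \<Rightarrow> ereal) \<Rightarrow> ereal" where
  "L_inf u = Liminf at_infinity (\<lambda>z. u z / ereal (ln (norm z)))"

definition LPSH :: "(complex ^ 'n \<Rightarrow> ereal) set" where
  "LPSH = {u. psh u \<and> \<bar>log_type u\<bar> \<noteq> \<infinity>}"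

definition LPSH_star :: "(complex ^ 'n \<Rightarrow> ereal) set" where
  "LPSH_star = {u. u \<in> LPSH \<and> (u \<longlongrightarrow> \<infinity>) at_infinity}"

definition exp_weight :: "real \<Rightarrow> ereal \<Rightarrow> ennreal" where
  "exp_weight c x = (if x = -\<infinity> then \<infinity> else ennreal (exp (-2 * c * real_of_ereal x)))"

definition c_inf :: "(complex ^ 'n \<Rightarrow> ereal) \<Rightarrow> ereal" where
  "c_inf u = Inf {ereal c | c. c > 0 \<and>
      (\<exists>K. compact K \<and>
         (\<integral>\<^sup>+ z\<in>(UNIV - K). exp_weight c (u z) \<partial>lebesgue) < \<infinity>)}"

text \<open>n / x with the convention n / 0 = +infinity.\<close>
definition n_over :: "nat \<Rightarrow> ereal \<Rightarrow> ereal" where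
  "n_over n x = (if x = 0 then \<infinity> else ereal (real n) / x)"

text \<open>Polynomials in n complex variables, given by finitely supported coefficient functions
  on multi-indices 'n \<Rightarrow> nat.\<close>
definition is_mpoly :: "(('n::finite \<Rightarrow> nat) \<Rightarrow> complex) \<Rightarrow> bool" where
  "is_mpoly c \<longleftrightarrow> finite {\<alpha>. c \<alpha> \<noteq> 0}"

definition mpoly_eval :: "(('n::finite \<Rightarrow> nat) \<Rightarrow> complex) \<Rightarrow> complex ^ 'n \<Rightarrow> complex" where
  "mpoly_eval c z = (\<Sum>\<alpha>\<in>{\<alpha>. c \<alpha> \<noteq> 0}. c \<alpha> * (\<Prod>i\<in>UNIV. (z $ i) ^ \<alpha> i))"

definition mpoly_deg :: "(('n::finite \<Rightarrow> nat) \<Rightarrow> complex) \<Rightarrow> nat" where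
  "mpoly_deg c = Max ({sum \<alpha> UNIV | \<alpha>. c \<alpha> \<noteq> 0} \<union> {0})"

definition pmap_eval :: "('q::finite \<Rightarrow> ('n::finite \<Rightarrow> nat) \<Rightarrow> complex) \<Rightarrow> complex ^ 'n \<Rightarrow> complex ^ 'q" where
  "pmap_eval P z = (\<chi> k. mpoly_eval (P k) z)"

definition pmap_deg :: "('q::finite \<Rightarrow> ('n::finite \<Rightarrow> nat) \<Rightarrow> complex) \<Rightarrow> nat" where
  "pmap_deg P = Max (range (\<lambda>k. mpoly_deg (P k)))"

definition log_norm_pmap :: "('q::finite \<Rightarrow> ('n::finite \<Rightarrow> nat) \<Rightarrow> complex) \<Rightarrow> complex ^ 'n \<Rightarrow> ereal" where
  "log_norm_pmap P z = (if pmap_eval P z = 0 then -\<infinity> else ereal (ln (norm (pmap_eval P z))))"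

definition lojasiewicz_inf :: "('q::finite \<Rightarrow> ('n::finite \<Rightarrow> nat) \<Rightarrow> complex) \<Rightarrow> ereal" where
  "lojasiewicz_inf P = Sup {ereal l | l. \<exists>C>0. eventually
       (\<lambda>z. norm (pmap_eval P z) \<ge> C * norm z powr l) at_infinity}"

end

theory Submission
  imports Defs
begin


definition shell :: "nat \<Rightarrow> 'a::euclidean_space set" where
  "shell k = {z. 2^k \<le> norm z \<and> norm z < 2^Suc k}"

lemma shell_sets[measurable]: "shell k \<in> sets lborel"
  unfolding shell_def by measurable

lemma shell_sets_borel[measurable]: "shell k \<in> sets borel"
  unfolding shell_def by measurable

lemma shell_measure:
  "emeasure lborel (shell k :: 'a::euclidean_space set) =
     ennreal (unit_ball_vol DIM('a) * (2^DIM('a) - 1) * (2^DIM('a))^k)"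
proof -
  have eq: "shell k = ball (0::'a) (2^Suc k) - ball 0 (2^k)"
    unfolding shell_def using zero_less_power[of "2::real" k] by (auto simp: dist_norm)
  have "emeasure lborel (shell k :: 'a set) = emeasure lborel (ball (0::'a) (2^Suc k)) - emeasure lborel (ball (0::'a) (2^k))"
    unfolding eq by (rule emeasure_Diff) (auto simp: emeasure_ball intro!: subset_ball)
  also have "\<dots> = ennreal (unit_ball_vol DIM('a) * (2^Suc k) ^ DIM('a)) - ennreal (unit_ball_vol DIM('a) * (2^k) ^ DIM('a))"
    by (simp add: emeasure_ball)
  also have "\<dots> = ennreal (unit_ball_vol DIM('a) * (2^Suc k) ^ DIM('a) - unit_ball_vol DIM('a) * (2^k) ^ DIM('a))"
    by (rule ennreal_minus) (auto intro!: mult_left_mono power_mono)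
  also have "unit_ball_vol DIM('a) * (2^Suc k) ^ DIM('a) - unit_ball_vol DIM('a) * (2^k) ^ DIM('a)
     = unit_ball_vol DIM('a) * (2^DIM('a) - 1) * (2^DIM('a))^k"
    by (simp add: power_mult_distrib algebra_simps flip: power_mult)
  finally show ?thesis .
qed

lemma shell_ex: assumes "1 \<le> norm (z::'a::euclidean_space)" shows "\<exists>k. z \<in> shell k"
proof -
  define k where "k = nat \<lfloor>log 2 (norm z)\<rfloor>"
  have l0: "0 \<le> log 2 (norm z)" using assms by (subst zero_le_log_cancel_iff) auto
  have "real k = of_int \<lfloor>log 2 (norm z)\<rfloor>" using l0 unfolding k_def by simp
  hence a: "real k \<le> log 2 (norm z)" "log 2 (norm z) < real k + 1" by linarith+
  have "2^k = 2 powr real k" by (simp add: powr_realpow)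
  also have "\<dots> \<le> 2 powr log 2 (norm z)" using a by simp
  also have "\<dots> = norm z" by (rule powr_log_cancel) (use assms in auto)
  finally have 1: "2^k \<le> norm z" .
  have "norm z = 2 powr log 2 (norm z)" by (rule powr_log_cancel[symmetric]) (use assms in auto)
  also have "\<dots> < 2 powr (real k + 1)" using a by simp
  also have "\<dots> = 2^Suc k" by (simp add: powr_realpow[symmetric] powr_add)
  finally show ?thesis using 1 unfolding shell_def by auto
qed

lemma ennreal_term_le_suminf: "(f::nat \<Rightarrow> ennreal) k \<le> (\<Sum>i. f i)"
  using ennreal_suminf_lessD not_le_imp_less by blast

lemma pow_shell_eq:
  "((2::real)^k) powr (-a) * (2^DIM('a::euclidean_space))^k = (2 powr (real DIM('a) - a))^k"
proof -
  have "((2::real)^k) powr (-a) = (2 powr (-a))^k"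
    by (simp add: powr_realpow[symmetric] powr_powr mult.commute flip: powr_power)
  moreover have "(2::real)^DIM('a) = 2 powr real DIM('a)" by (simp add: powr_realpow)
  ultimately show ?thesis
    by (simp add: power_mult_distrib[symmetric] powr_add[symmetric])
qed

lemma integral_outer_finite:
  assumes a: "a > real DIM('a::euclidean_space)"
  shows "(\<integral>\<^sup>+ z. ennreal (norm (z::'a) powr (-a)) * indicator {z. 1 \<le> norm z} z \<partial>lborel) < \<infinity>"
proof -
  define V where "V = unit_ball_vol DIM('a) * (2^DIM('a) - 1)"
  define q where "q = (2::real) powr (real DIM('a) - a)"
  have V0: "V \<ge> 0" unfolding V_def by (intro mult_nonneg_nonneg) auto
  have q0: "0 \<le> q" "q < 1" using a unfolding q_def by (auto simp: powr_less_one)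
  define g where "g k z = ennreal ((2^k) powr (-a)) * indicator (shell k :: 'a set) z" for k z
  have le: "ennreal (norm z powr (-a)) * indicator {z. 1 \<le> norm z} z \<le> (\<Sum>k. g k z)" for z
  proof (cases "1 \<le> norm z")
    case True
    then obtain k where k: "z \<in> shell k" using shell_ex by blast
    have "ennreal (norm z powr (-a)) \<le> ennreal ((2^k) powr (-a))"
      using k a unfolding shell_def by (intro ennreal_leI powr_mono2') auto
    also have "\<dots> = g k z" using k unfolding g_def by simp
    also have "\<dots> \<le> (\<Sum>k. g k z)" by (rule ennreal_term_le_suminf)
    finally show ?thesis using True by simp
  qed simp
  have "(\<integral>\<^sup>+ z. ennreal (norm (z::'a) powr (-a)) * indicator {z. 1 \<le> norm z} z \<partial>lborel)
      \<le> (\<integral>\<^sup>+ z. (\<Sum>k. g k z) \<partial>lborel)"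
    by (rule nn_integral_mono) (rule le)
  also have "\<dots> = (\<Sum>k. integral\<^sup>N lborel (g k))"
    by (rule nn_integral_suminf) (simp add: g_def)
  also have "\<dots> = (\<Sum>k. ennreal (V * q^k))"
  proof (rule suminf_cong)
    fix k
    have "integral\<^sup>N lborel (g k) = ennreal ((2^k) powr (-a)) * emeasure lborel (shell k :: 'a set)"
      unfolding g_def by (rule nn_integral_cmult_indicator) (simp add: shell_sets_borel)
    also have "\<dots> = ennreal ((2^k) powr (-a) * (V * (2^DIM('a))^k))"
      by (simp add: shell_measure V_def ennreal_mult'' V0 mult.assoc)
    also have "(2^k) powr (-a) * (V * (2^DIM('a))^k) = V * q^k"
      using pow_shell_eq[where 'a='a, of k a] unfolding q_def by (simp add: algebra_simps)
    finally show "integral\<^sup>N lborel (g k) = ennreal (V * q^k)" .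
  qed
  also have "\<dots> = ennreal (\<Sum>k. V * q^k)"
    by (rule suminf_ennreal2) (use V0 q0 in \<open>auto intro!: summable_mult summable_geometric\<close>)
  also have "\<dots> < \<infinity>" by simp
  finally show ?thesis .
qed

lemma integral_outer_infinite:
  fixes f :: "'a::euclidean_space \<Rightarrow> ennreal"
  assumes a: "a < real DIM('a)" "0 \<le> a" and M: "M > 0" and K: "compact K"
    and f: "\<And>z. R \<le> norm z \<Longrightarrow> ennreal (M * norm z powr (-a)) \<le> f z"
  shows "(\<integral>\<^sup>+ z\<in>UNIV - K. f z \<partial>lebesgue) = \<infinity>"
proof (rule ccontr)
  assume ne: "(\<integral>\<^sup>+ z\<in>UNIV - K. f z \<partial>lebesgue) \<noteq> \<infinity>"
  obtain r where r: "\<forall>x\<in>K. norm x \<le> r" using compact_imp_bounded[OF K] bounded_iff by blast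
  define R0 where "R0 = max (max R r) 1"
  obtain k0 where k0: "R0 < 2^k0" using real_arch_pow[of 2 R0] by auto
  define V where "V = unit_ball_vol DIM('a) * (2^DIM('a) - 1)"
  define q where "q = (2::real) powr (real DIM('a) - a)"
  define c0 where "c0 = M * 2 powr (-a) * V"
  have "(1::real) < 2^DIM('a)" using DIM_positive[where 'a='a]
    by (metis one_less_numeral_iff one_less_power semiring_norm(76))
  hence V0: "V > 0" unfolding V_def by simp
  have q1: "1 < q" using a unfolding q_def by simp
  have c0: "c0 > 0" unfolding c0_def using M V0 by simp
  have lower: "ennreal (c0 * q^k) \<le> (\<integral>\<^sup>+ z\<in>UNIV - K. f z \<partial>lebesgue)" if k: "k0 \<le> k" for k
  proof -
    have "(2::real)^k0 \<le> 2^k" using k by (intro power_increasing) auto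
    hence Rk: "R0 < 2^k" using k0 by linarith
    have mono: "(\<integral>\<^sup>+ z. ennreal (M * (2^Suc k) powr (-a)) * indicator (shell k :: 'a set) z \<partial>lebesgue)
        \<le> (\<integral>\<^sup>+ z\<in>UNIV - K. f z \<partial>lebesgue)"
    proof (rule nn_integral_mono)
      fix z :: 'a
      show "ennreal (M * (2^Suc k) powr (-a)) * indicator (shell k) z \<le> f z * indicator (UNIV - K) z"
      proof (cases "z \<in> shell k")
        case True
        hence z: "2^k \<le> norm z" "norm z < 2^Suc k" unfolding shell_def by auto
        have zK: "z \<notin> K" using r z Rk unfolding R0_def by force
        have "R \<le> norm z" using z Rk unfolding R0_def by linarith
        hence "ennreal (M * norm z powr (-a)) \<le> f z" by (rule f)
        moreover have "ennreal (M * (2^Suc k) powr (-a)) \<le> ennreal (M * norm z powr (-a))"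
        proof (intro ennreal_leI mult_left_mono powr_mono2')
          show "0 < norm z" using z by (smt (verit) zero_less_power)
        qed (use z M a in auto)
        ultimately show ?thesis using True zK by simp
      qed simp
    qed
    have eq: "(\<integral>\<^sup>+ z. ennreal (M * (2^Suc k) powr (-a)) * indicator (shell k :: 'a set) z \<partial>lebesgue)
       = ennreal (c0 * q^k)"
    proof -
    have "(\<integral>\<^sup>+ z. ennreal (M * (2^Suc k) powr (-a)) * indicator (shell k :: 'a set) z \<partial>lebesgue)
       = (\<integral>\<^sup>+ z. ennreal (M * (2^Suc k) powr (-a)) * indicator (shell k :: 'a set) z \<partial>lborel)"
      by (rule nn_integral_completion)
    also have "\<dots> = ennreal (M * (2^Suc k) powr (-a)) * emeasure lborel (shell k :: 'a set)"
      by (rule nn_integral_cmult_indicator) (simp add: shell_sets_borel)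
    also have "\<dots> = ennreal (M * (2^Suc k) powr (-a) * (V * (2^DIM('a))^k))"
      using M V0 by (simp add: shell_measure V_def ennreal_mult'' mult.assoc)
    also have "M * (2^Suc k) powr (-a) * (V * (2^DIM('a))^k) = c0 * q^k"
    proof -
      have "((2::real)^Suc k) powr (-a) = 2 powr (-a) * (2^k) powr (-a)"
        by (simp add: powr_mult)
      thus ?thesis using pow_shell_eq[where 'a='a, of k a] unfolding q_def c0_def
        by (simp add: algebra_simps)
    qed
    finally show ?thesis .
    qed
    show ?thesis using mono unfolding eq .
  qed
  obtain y where y: "(\<integral>\<^sup>+ z\<in>UNIV - K. f z \<partial>lebesgue) = ennreal y" "0 \<le> y"
    using ne by (cases "(\<integral>\<^sup>+ z\<in>UNIV - K. f z \<partial>lebesgue)" rule: ennreal_cases) auto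
  obtain n where n: "y / c0 < q^n" using real_arch_pow[OF q1] by blast
  define k where "k = max n k0"
  have "q^n \<le> q^k" unfolding k_def using q1 by (intro power_increasing) auto
  hence "c0 * q^n \<le> c0 * q^k" using c0 by simp
  moreover have "y < c0 * q^n" using n c0 by (simp add: field_simps)
  ultimately have "y < c0 * q^k" by linarith
  hence "ennreal y < ennreal (c0 * q^k)" using y(2) by (simp add: ennreal_less_iff)
  with lower[of k] y(1) show False unfolding k_def by simp
qed


lemma exp_bound_eq:
  fixes c l b x :: real
  assumes "x > 0"
  shows "exp (-2 * c * (l * ln x + b)) = exp (-2 * c * b) * x powr (-(2 * c * l))"
  using assms by (simp add: powr_def exp_add[symmetric] algebra_simps)

lemma UB_lemma:
  fixes u :: "complex ^ 'n \<Rightarrow> ereal"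
  assumes c: "c > 0" and l: "l > 0" and cl: "c * l > real CARD('n)"
    and bnd: "\<And>z. R \<le> norm z \<Longrightarrow> ereal (l * ln (norm z) + b) \<le> u z \<and> u z \<noteq> \<infinity>"
  shows "\<exists>K. compact K \<and> (\<integral>\<^sup>+ z\<in>UNIV - K. exp_weight c (u z) \<partial>lebesgue) < \<infinity>"
proof (intro exI conjI)
  define R0 where "R0 = max R 1"
  define M where "M = exp (-2 * c * b)"
  define a where "a = 2 * c * l"
  have aD: "a > real DIM(complex ^ 'n)" using cl unfolding a_def by simp
  show "compact (cball (0::complex^'n) R0)" by simp
  have "(\<integral>\<^sup>+ z\<in>UNIV - cball 0 R0. exp_weight c (u z) \<partial>lebesgue)
      \<le> (\<integral>\<^sup>+ z. ennreal M * (ennreal (norm (z::complex^'n) powr (-a)) * indicator {z. 1 \<le> norm z} z) \<partial>lebesgue)"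
  proof (rule nn_integral_mono)
    fix z :: "complex ^ 'n"
    show "exp_weight c (u z) * indicator (UNIV - cball 0 R0) z
        \<le> ennreal M * (ennreal (norm z powr (-a)) * indicator {z. 1 \<le> norm z} z)"
    proof (cases "z \<in> cball 0 R0")
      case False
      hence z: "R \<le> norm z" "1 \<le> norm z" unfolding R0_def by auto
      from bnd[OF z(1)] obtain r where r: "u z = ereal r" "l * ln (norm z) + b \<le> r"
        by (cases "u z") auto
      have "exp_weight c (u z) = ennreal (exp (-2 * c * r))" unfolding exp_weight_def using r by simp
      also have "\<dots> \<le> ennreal (exp (-2 * c * (l * ln (norm z) + b)))"
        using r c by (intro ennreal_leI) (simp add: mult_left_mono)
      also have "exp (-2 * c * (l * ln (norm z) + b)) = M * norm z powr (-a)"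
        unfolding M_def a_def using z by (intro exp_bound_eq) auto
      moreover have "ennreal (M * norm z powr (-a)) = ennreal M * ennreal (norm z powr (-a))"
        unfolding M_def by (rule ennreal_mult) auto
      ultimately show ?thesis using False z by simp
    qed simp
  qed
  also have "\<dots> = (\<integral>\<^sup>+ z. ennreal M * (ennreal (norm (z::complex^'n) powr (-a)) * indicator {z. 1 \<le> norm z} z) \<partial>lborel)"
    by (rule nn_integral_completion)
  also have "\<dots> = ennreal M * (\<integral>\<^sup>+ z. ennreal (norm (z::complex^'n) powr (-a)) * indicator {z. 1 \<le> norm z} z \<partial>lborel)"
    by (rule nn_integral_cmult) measurable
  also have "\<dots> < \<infinity>"
    using integral_outer_finite[OF aD] by (simp add: ennreal_mult_less_top)
  finally show "(\<integral>\<^sup>+ z\<in>UNIV - cball 0 R0. exp_weight c (u z) \<partial>lebesgue) < \<infinity>" .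
qed

lemma LB_lemma:
  fixes u :: "complex ^ 'n \<Rightarrow> ereal"
  assumes c: "c > 0" and s: "s > 0" and cs: "c * s < real CARD('n)"
    and bnd: "\<And>z. R \<le> norm z \<Longrightarrow> u z \<le> ereal (s * ln (norm z) + b) \<and> u z \<noteq> \<infinity>"
    and K: "compact K"
  shows "(\<integral>\<^sup>+ z\<in>UNIV - K. exp_weight c (u z) \<partial>lebesgue) = \<infinity>"
proof (rule integral_outer_infinite[where a = "2 * c * s" and M = "exp (-2 * c * b)" and R = "max R 1"])
  show "2 * c * s < real DIM(complex ^ 'n)" using cs by simp
  show "0 \<le> 2 * c * s" using c s by simp
  fix z :: "complex ^ 'n"
  assume "max R 1 \<le> norm z"
  hence z: "R \<le> norm z" "1 \<le> norm z" by auto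
  show "ennreal (exp (-2 * c * b) * norm z powr (-(2 * c * s))) \<le> exp_weight c (u z)"
  proof (cases "u z = -\<infinity>")
    case False
    with bnd[OF z(1)] obtain r where r: "u z = ereal r" "r \<le> s * ln (norm z) + b"
      by (cases "u z") auto
    have "exp (-2 * c * b) * norm z powr (-(2 * c * s)) = exp (-2 * c * (s * ln (norm z) + b))"
      using z by (intro exp_bound_eq[symmetric]) auto
    also have "\<dots> \<le> exp (-2 * c * r)" using r c by (simp add: mult_left_mono)
    finally show ?thesis unfolding exp_weight_def using r by (simp add: ennreal_leI)
  qed (simp add: exp_weight_def)
qed (use K in auto)

lemma mpoly_growth:
  fixes p :: "('n::finite \<Rightarrow> nat) \<Rightarrow> complex"
  assumes p: "is_mpoly p" and d: "mpoly_deg p \<le> d" and z: "1 \<le> norm z"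
  shows "norm (mpoly_eval p z) \<le> (\<Sum>\<alpha>\<in>{\<alpha>. p \<alpha> \<noteq> 0}. norm (p \<alpha>)) * norm z ^ d"
proof -
  have fin: "finite {\<alpha>. p \<alpha> \<noteq> 0}" using p unfolding is_mpoly_def .
  have trm: "norm (p \<alpha> * (\<Prod>i\<in>UNIV. (z $ i) ^ \<alpha> i)) \<le> norm (p \<alpha>) * norm z ^ d"
    if a: "p \<alpha> \<noteq> 0" for \<alpha>
  proof -
    have "sum \<alpha> UNIV \<le> mpoly_deg p"
      unfolding mpoly_deg_def using fin a by (intro Max_ge) auto
    hence sd: "sum \<alpha> UNIV \<le> d" using d by simp
    have "norm (\<Prod>i\<in>UNIV. (z $ i) ^ \<alpha> i) = (\<Prod>i\<in>UNIV. norm (z $ i) ^ \<alpha> i)"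
      by (simp add: prod_norm[symmetric] norm_power)
    also have "\<dots> \<le> (\<Prod>i\<in>UNIV. norm z ^ \<alpha> i)"
      by (intro prod_mono conjI power_mono) (auto simp: Finite_Cartesian_Product.norm_nth_le)
    also have "\<dots> = norm z ^ sum \<alpha> UNIV" by (simp add: power_sum)
    also have "\<dots> \<le> norm z ^ d" using sd z by (intro power_increasing) auto
    finally show ?thesis by (simp add: norm_mult mult_left_mono)
  qed
  have "norm (mpoly_eval p z) \<le> (\<Sum>\<alpha>\<in>{\<alpha>. p \<alpha> \<noteq> 0}. norm (p \<alpha> * (\<Prod>i\<in>UNIV. (z $ i) ^ \<alpha> i)))"
    unfolding mpoly_eval_def by (rule norm_sum)
  also have "\<dots> \<le> (\<Sum>\<alpha>\<in>{\<alpha>. p \<alpha> \<noteq> 0}. norm (p \<alpha>) * norm z ^ d)"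
    by (intro sum_mono trm) auto
  also have "\<dots> = (\<Sum>\<alpha>\<in>{\<alpha>. p \<alpha> \<noteq> 0}. norm (p \<alpha>)) * norm z ^ d"
    by (simp add: sum_distrib_right)
  finally show ?thesis .
qed

lemma pmap_growth:
  fixes P :: "'q::finite \<Rightarrow> ('n::finite \<Rightarrow> nat) \<Rightarrow> complex"
  assumes P: "\<forall>k. is_mpoly (P k)"
  shows "\<exists>C>0. \<forall>z. 1 \<le> norm z \<longrightarrow> norm (pmap_eval P z) \<le> C * norm z ^ pmap_deg P"
proof -
  define C0 where "C0 = (\<Sum>k\<in>UNIV. \<Sum>\<alpha>\<in>{\<alpha>. P k \<alpha> \<noteq> 0}. norm (P k \<alpha>))"
  have C00: "C0 \<ge> 0" unfolding C0_def by (intro sum_nonneg) auto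
  show ?thesis
  proof (intro exI conjI allI impI)
    show "C0 + 1 > 0" using C00 by simp
    fix z :: "complex ^ 'n"
    assume z: "1 \<le> norm z"
    have dk: "mpoly_deg (P k) \<le> pmap_deg P" for k
      unfolding pmap_deg_def by (rule Max_ge) auto
    have "norm (pmap_eval P z) \<le> (\<Sum>k\<in>UNIV. norm (pmap_eval P z $ k))"
      unfolding norm_vec_def by (rule L2_set_le_sum) auto
    also have "\<dots> \<le> (\<Sum>k\<in>UNIV. (\<Sum>\<alpha>\<in>{\<alpha>. P k \<alpha> \<noteq> 0}. norm (P k \<alpha>)) * norm z ^ pmap_deg P)"
      unfolding pmap_eval_def using P z dk by (intro sum_mono) (simp add: mpoly_growth)
    also have "\<dots> = C0 * norm z ^ pmap_deg P" unfolding C0_def by (simp add: sum_distrib_right)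
    also have "\<dots> \<le> (C0 + 1) * norm z ^ pmap_deg P" using z by (intro mult_right_mono) auto
    finally show "norm (pmap_eval P z) \<le> (C0 + 1) * norm z ^ pmap_deg P" .
  qed
qed

lemma c_inf_geI:
  assumes "\<And>c K. c > 0 \<Longrightarrow> compact K \<Longrightarrow>
      (\<integral>\<^sup>+ z\<in>UNIV - K. exp_weight c (u z) \<partial>lebesgue) < \<infinity> \<Longrightarrow> x \<le> ereal c"
  shows "x \<le> c_inf u"
  unfolding c_inf_def using assms by (auto intro!: Inf_greatest)

lemma c_inf_leI:
  assumes "c > 0" "compact K" "(\<integral>\<^sup>+ z\<in>UNIV - K. exp_weight c (u z) \<partial>lebesgue) < \<infinity>"
  shows "c_inf u \<le> ereal c"
  unfolding c_inf_def using assms by (auto intro!: Inf_lower)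

lemma quot_eq:
  assumes "u = ereal r" "1 < (x::real)"
  shows "u / ereal (ln x) = ereal (r / ln x)"
  using assms by simp

lemma LPSH_star_basic:
  fixes u :: "complex ^ 'n \<Rightarrow> ereal"
  assumes u: "u \<in> LPSH_star"
  shows "\<forall>z. u z \<noteq> \<infinity>"
    and "eventually (\<lambda>z. 0 < u z \<and> 1 < norm z) at_infinity"
    and "\<bar>log_type u\<bar> \<noteq> \<infinity>"
proof -
  show "\<forall>z. u z \<noteq> \<infinity>" using u unfolding LPSH_star_def LPSH_def psh_def by auto
  show "\<bar>log_type u\<bar> \<noteq> \<infinity>" using u unfolding LPSH_star_def LPSH_def by auto
  have "(u \<longlongrightarrow> \<infinity>) at_infinity" using u unfolding LPSH_star_def by auto
  hence "eventually (\<lambda>z. 0 < u z) at_infinity" by (rule order_tendstoD(1)) simp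
  moreover have "eventually (\<lambda>z::complex^'n. 1 < norm z) at_infinity"
    unfolding eventually_at_infinity by (rule exI[of _ 2]) auto
  ultimately show "eventually (\<lambda>z. 0 < u z \<and> 1 < norm z) at_infinity"
    by (rule eventually_conj)
qed

lemma L_inf_nonneg:
  fixes u :: "complex ^ 'n \<Rightarrow> ereal"
  assumes u: "u \<in> LPSH_star"
  shows "0 \<le> L_inf u" "L_inf u \<le> log_type u"
proof -
  have "eventually (\<lambda>z. 0 \<le> u z / ereal (ln (norm z))) at_infinity"
    using LPSH_star_basic(2)[OF u]
  proof (rule eventually_mono)
    fix z :: "complex^'n" assume z: "0 < u z \<and> 1 < norm z"
    thus "0 \<le> u z / ereal (ln (norm z))" by (cases "u z") auto
  qed
  thus "0 \<le> L_inf u" unfolding L_inf_def by (rule Liminf_bounded)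
  show "L_inf u \<le> log_type u" unfolding L_inf_def log_type_def
    by (rule Liminf_le_Limsup) (rule trivial_limit_at_infinity)
qed

lemma part1_lower:
  fixes u :: "complex ^ 'n \<Rightarrow> ereal"
  assumes u: "u \<in> LPSH_star"
  shows "n_over CARD('n) (log_type u) \<le> c_inf u"
proof -
  note B = LPSH_star_basic[OF u]
  note L = L_inf_nonneg[OF u]
  obtain r where r: "log_type u = ereal r" using B(3) by (cases "log_type u") auto
  have "0 \<le> ereal r" using L r by (metis order_trans)
  hence r0: "0 \<le> r" by simp
  have key: "real CARD('n) \<le> c * r"
    if c: "c > 0" and K: "compact K" and fin: "(\<integral>\<^sup>+ z\<in>UNIV - K. exp_weight c (u z) \<partial>lebesgue) < \<infinity>" for c K
  proof (rule ccontr)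
    assume "\<not> real CARD('n) \<le> c * r"
    hence lt: "c * r < real CARD('n)" by simp
    define s where "s = r + (real CARD('n) - c * r) / (2 * c)"
    have sr: "r < s" unfolding s_def using lt c by (simp add: field_simps)
    have cs: "c * s < real CARD('n)" unfolding s_def using lt c by (simp add: field_simps)
    have s0: "s > 0" using sr r0 by simp
    have "eventually (\<lambda>z. u z / ereal (ln (norm z)) < ereal s) at_infinity"
      using sr r unfolding log_type_def by (intro Limsup_lessD) simp
    hence "eventually (\<lambda>z. (0 < u z \<and> 1 < norm z) \<and> u z / ereal (ln (norm z)) < ereal s) at_infinity"
      by (rule eventually_conj[OF B(2)])
    then obtain R where R: "\<And>z. R \<le> norm z \<Longrightarrow> (0 < u z \<and> 1 < norm z) \<and> u z / ereal (ln (norm z)) < ereal s"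
      unfolding eventually_at_infinity by blast
    have bnd: "u z \<le> ereal (s * ln (norm z) + 0) \<and> u z \<noteq> \<infinity>" if z: "R \<le> norm z" for z
    proof -
      have z1: "1 < norm z" using R[OF z] by blast
      hence lnp: "0 < ln (norm z)" by (rule ln_gt_zero)
      from R[OF z] B(1) lnp obtain t where t: "u z = ereal t" "1 < norm z" "t / ln (norm z) < s"
        by (cases "u z") auto
      have "t < s * ln (norm z)" using t(3) lnp by (simp add: pos_divide_less_eq)
      thus ?thesis using t by simp
    qed
    have "(\<integral>\<^sup>+ z\<in>UNIV - K. exp_weight c (u z) \<partial>lebesgue) = \<infinity>"
      by (rule LB_lemma[OF c s0 cs bnd K])
    with fin show False by simp
  qed
  show ?thesis
  proof (rule c_inf_geI)
    fix c K assume c: "c > 0" and K: "compact K"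
      and fin: "(\<integral>\<^sup>+ z\<in>UNIV - K. exp_weight c (u z) \<partial>lebesgue) < \<infinity>"
    have k: "real CARD('n) \<le> c * r" by (rule key[OF c K fin])
    have "r \<noteq> 0" using k by (auto simp: not_le)
    hence "r > 0" using r0 by simp
    thus "n_over CARD('n) (log_type u) \<le> ereal c"
      using k unfolding n_over_def r by (simp add: pos_divide_le_eq mult.commute)
  qed
qed

lemma part1_pos:
  fixes u :: "complex ^ 'n \<Rightarrow> ereal"
  assumes u: "u \<in> LPSH_star"
  shows "0 < n_over CARD('n) (log_type u)"
proof -
  note B = LPSH_star_basic[OF u]
  note L = L_inf_nonneg[OF u]
  obtain r where r: "log_type u = ereal r" using B(3) by (cases "log_type u") auto
  have "0 \<le> ereal r" using L r by (metis order_trans)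
  hence r0: "0 \<le> r" by simp
  show ?thesis unfolding n_over_def r using r0 by auto
qed

lemma part1_upper:
  fixes u :: "complex ^ 'n \<Rightarrow> ereal"
  assumes u: "u \<in> LPSH_star"
  shows "c_inf u \<le> n_over CARD('n) (L_inf u)"
proof -
  note B = LPSH_star_basic[OF u]
  note L = L_inf_nonneg[OF u]
  obtain r where r: "L_inf u = ereal r" using B(3) L by (cases "L_inf u"; cases "log_type u") auto
  have "0 \<le> ereal r" using L r by (metis order_trans)
  hence r0: "0 \<le> r" by simp
  show ?thesis
  proof (cases "r = 0")
    case True thus ?thesis unfolding n_over_def r by simp
  next
    case False
    hence rp: "r > 0" using r0 by simp
    have "c_inf u \<le> y" if y: "ereal (real CARD('n) / r) < y" for y
    proof (cases y)
      case (real c)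
      have ncr: "real CARD('n) / r < c" using y real by simp
      have npos: "real CARD('n) > 0" by simp
      have c0: "c > 0" using ncr rp npos by (smt (verit) divide_pos_pos)
      have cr: "real CARD('n) < c * r" using ncr rp by (simp add: divide_less_eq)
      define l where "l = (real CARD('n) / c + r) / 2"
      have nc: "real CARD('n) / c < r" using cr c0 by (simp add: divide_less_eq mult.commute)
      have lr: "l < r" unfolding l_def using nc by simp
      have l0: "l > 0" unfolding l_def using npos c0 rp by (simp add: add_pos_pos)
      have cl: "c * l > real CARD('n)" unfolding l_def using cr c0 by (simp add: field_simps)
      have "eventually (\<lambda>z. ereal l < u z / ereal (ln (norm z))) at_infinity"
        using lr r unfolding L_inf_def by (intro less_LiminfD) simp
      hence "eventually (\<lambda>z. (0 < u z \<and> 1 < norm z) \<and> ereal l < u z / ereal (ln (norm z))) at_infinity"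
        by (rule eventually_conj[OF B(2)])
      then obtain R where R: "\<And>z. R \<le> norm z \<Longrightarrow> (0 < u z \<and> 1 < norm z) \<and> ereal l < u z / ereal (ln (norm z))"
        unfolding eventually_at_infinity by blast
      have bnd: "ereal (l * ln (norm z) + 0) \<le> u z \<and> u z \<noteq> \<infinity>" if z: "R \<le> norm z" for z
      proof -
        have z1: "1 < norm z" using R[OF z] by blast
        hence lnp: "0 < ln (norm z)" by (rule ln_gt_zero)
        from R[OF z] B(1) lnp obtain t where t: "u z = ereal t" "1 < norm z" "l < t / ln (norm z)"
          by (cases "u z") auto
          have "l * ln (norm z) < t" using t(3) lnp by (simp add: pos_less_divide_eq)
        thus ?thesis using t by simp
      qed
      obtain K where K: "compact K" "(\<integral>\<^sup>+ z\<in>UNIV - K. exp_weight c (u z) \<partial>lebesgue) < \<infinity>"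
        using UB_lemma[OF c0 l0 cl bnd] by blast
      show ?thesis unfolding real by (rule c_inf_leI[OF c0 K])
    next
      case PInf thus ?thesis by simp
    next
      case MInf thus ?thesis using y by simp
    qed
    hence "c_inf u \<le> ereal (real CARD('n) / r)" by (rule dense_ge)
    moreover have "n_over CARD('n) (L_inf u) = ereal (real CARD('n) / r)"
      unfolding n_over_def r using rp by simp
    ultimately show ?thesis by simp
  qed
qed

lemma part2_lower:
  fixes P :: "'q::finite \<Rightarrow> ('n::finite \<Rightarrow> nat) \<Rightarrow> complex"
  assumes P: "\<forall>k. is_mpoly (P k)"
  shows "ereal (real CARD('n) / real (pmap_deg P)) \<le> c_inf (log_norm_pmap P)"
proof (cases "pmap_deg P = 0")
  case True
  thus ?thesis by (intro c_inf_geI) auto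
next
  case False
  define d where "d = pmap_deg P"
  have d0: "real d > 0" using False unfolding d_def by simp
  obtain C where C: "C > 0" "\<And>z. 1 \<le> norm z \<Longrightarrow> norm (pmap_eval P z) \<le> C * norm z ^ d"
    using pmap_growth[OF P] unfolding d_def by blast
  show ?thesis
  proof (rule c_inf_geI)
    fix c K assume c: "c > 0" and K: "compact K"
      and fin: "(\<integral>\<^sup>+ z\<in>UNIV - K. exp_weight c (log_norm_pmap P z) \<partial>lebesgue) < \<infinity>"
    have "real CARD('n) \<le> c * real d"
    proof (rule ccontr)
      assume "\<not> real CARD('n) \<le> c * real d"
      hence cs: "c * real d < real CARD('n)" by simp
      have bnd: "log_norm_pmap P z \<le> ereal (real d * ln (norm z) + ln C) \<and> log_norm_pmap P z \<noteq> \<infinity>"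
        if z: "1 \<le> norm z" for z
      proof (cases "pmap_eval P z = 0")
        case False
        have "0 < C * norm z ^ d" by (intro mult_pos_pos zero_less_power) (use C(1) z in auto)
        hence le1: "ln (norm (pmap_eval P z)) \<le> ln (C * norm z ^ d)"
          using C(2)[OF z] False by (subst ln_le_cancel_iff) auto
        have nz: "0 < norm z" using z by linarith
        have "ln (C * norm z ^ d) = real d * ln (norm z) + ln C"
          using C(1) nz by (simp add: ln_mult ln_realpow)
        with le1 have "ln (norm (pmap_eval P z)) \<le> real d * ln (norm z) + ln C" by simp
        thus ?thesis using False unfolding log_norm_pmap_def by simp
      qed (simp add: log_norm_pmap_def)
      have "(\<integral>\<^sup>+ z\<in>UNIV - K. exp_weight c (log_norm_pmap P z) \<partial>lebesgue) = \<infinity>"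
        by (rule LB_lemma[OF c d0 cs bnd K])
      with fin show False by simp
    qed
    thus "ereal (real CARD('n) / real (pmap_deg P)) \<le> ereal c"
      using d0 unfolding d_def by (simp add: pos_divide_le_eq)
  qed
qed

lemma part2_upper:
  fixes P :: "'q::finite \<Rightarrow> ('n::finite \<Rightarrow> nat) \<Rightarrow> complex"
  assumes u: "log_norm_pmap P \<in> LPSH_star"
  shows "c_inf (log_norm_pmap P) \<le> n_over CARD('n) (lojasiewicz_inf P)"
proof -
  note B = LPSH_star_basic[OF u]
  define S where "S = {ereal l | l. \<exists>C>0. eventually
       (\<lambda>z. norm (pmap_eval P z) \<ge> C * norm z powr l) at_infinity}"
  have Loj: "lojasiewicz_inf P = Sup S" unfolding lojasiewicz_inf_def S_def ..
  have "ereal 0 \<in> S"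
  proof -
    have "eventually (\<lambda>z. norm (pmap_eval P z) \<ge> 1 * norm z powr 0) at_infinity"
      using B(2)
    proof (rule eventually_mono)
      fix z assume z: "0 < log_norm_pmap P z \<and> 1 < norm (z::complex^'n)"
      hence "pmap_eval P z \<noteq> 0" "0 < ln (norm (pmap_eval P z))"
        unfolding log_norm_pmap_def by (auto split: if_splits)
      hence "1 < norm (pmap_eval P z)" by (simp add: ln_gt_zero_iff)
      thus "norm (pmap_eval P z) \<ge> 1 * norm z powr 0" by simp
    qed
    thus ?thesis using zero_less_one[where 'a=real] unfolding S_def by blast
  qed
  hence L0: "0 \<le> lojasiewicz_inf P" unfolding Loj by (metis Sup_upper zero_ereal_def)
  show ?thesis
  proof (cases "lojasiewicz_inf P = 0")
    case True thus ?thesis unfolding n_over_def by simp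
  next
    case False
    hence Lp: "0 < lojasiewicz_inf P" using L0 by simp
    have npos: "real CARD('n) > 0" by simp
    have "c_inf (log_norm_pmap P) \<le> y" if y: "n_over CARD('n) (lojasiewicz_inf P) < y" for y
    proof (cases y)
      case (real c)
      note yc = this
      have cc: "c > 0 \<and> ereal (real CARD('n) / c) < lojasiewicz_inf P"
      proof (cases "lojasiewicz_inf P")
        case (real L)
        hence L: "L > 0" using Lp by simp
        have "real CARD('n) / L < c" using y yc \<open>lojasiewicz_inf P = ereal L\<close> False
          unfolding n_over_def by simp
        moreover have "real CARD('n) / L > 0" using L npos by simp
        ultimately have c0: "c > 0" by linarith
        have "real CARD('n) < c * L" using \<open>real CARD('n) / L < c\<close> L by (simp add: divide_less_eq)
        hence "real CARD('n) / c < L" using c0 by (simp add: divide_less_eq mult.commute)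
        thus ?thesis using c0 \<open>lojasiewicz_inf P = ereal L\<close> by simp
      next
        case PInf
        thus ?thesis using y yc unfolding n_over_def by simp
      qed (use Lp in simp)
      hence c0: "c > 0" and lt: "ereal (real CARD('n) / c) < Sup S" using Loj by auto
      then obtain x where x: "x \<in> S" "ereal (real CARD('n) / c) < x" by (auto simp: less_Sup_iff)
      then obtain l C where lC: "x = ereal l" "C > 0"
        "eventually (\<lambda>z. norm (pmap_eval P z) \<ge> C * norm z powr l) at_infinity"
        unfolding S_def by blast
      have nl: "real CARD('n) / c < l" using x lC by simp
      have l0: "l > 0" using nl npos c0 by (smt (verit) divide_pos_pos)
      have cl: "c * l > real CARD('n)" using nl c0 by (simp add: divide_less_eq mult.commute)
      obtain R where R: "\<And>z. R \<le> norm z \<Longrightarrow> norm (pmap_eval P z) \<ge> C * norm z powr l"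
        using lC(3) unfolding eventually_at_infinity by blast
      have bnd: "ereal (l * ln (norm z) + ln C) \<le> log_norm_pmap P z \<and> log_norm_pmap P z \<noteq> \<infinity>"
        if z: "max R 1 \<le> norm z" for z
      proof -
        have z1: "1 \<le> norm z" "R \<le> norm z" using z by auto
        have nz: "0 < norm z" using z1 by linarith
        have pos: "0 < C * norm z powr l" using lC(2) nz by simp
        have ge: "norm (pmap_eval P z) \<ge> C * norm z powr l" by (rule R[OF z1(2)])
        hence ne: "pmap_eval P z \<noteq> 0" using pos by auto
        have "l * ln (norm z) + ln C = ln (C * norm z powr l)"
          using lC(2) nz by (simp add: ln_mult ln_powr)
        also have "\<dots> \<le> ln (norm (pmap_eval P z))" using ge pos by (subst ln_le_cancel_iff) auto
        finally show ?thesis using ne unfolding log_norm_pmap_def by simp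
      qed
      obtain K where K: "compact K"
        "(\<integral>\<^sup>+ z\<in>UNIV - K. exp_weight c (log_norm_pmap P z) \<partial>lebesgue) < \<infinity>"
        using UB_lemma[OF c0 l0 cl bnd] by blast
      show ?thesis unfolding real by (rule c_inf_leI[OF c0 K])
    next
      case PInf thus ?thesis by simp
    next
      case MInf thus ?thesis using y by simp
    qed
    thus ?thesis by (rule dense_ge)
  qed
qed

theorem corollary5p2:
  shows "(\<forall>u :: complex ^ 'n \<Rightarrow> ereal. u \<in> LPSH_star \<longrightarrow>
            0 < n_over CARD('n) (log_type u) \<and>
            n_over CARD('n) (log_type u) \<le> c_inf u \<and>
            c_inf u \<le> n_over CARD('n) (L_inf u) \<and>
            n_over CARD('n) (L_inf u) \<le> \<infinity>)
       \<and> (\<forall>P :: 'q::finite \<Rightarrow> ('n \<Rightarrow> nat) \<Rightarrow> complex.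
            (\<forall>k. is_mpoly (P k)) \<and> log_norm_pmap P \<in> LPSH_star \<longrightarrow>
            ereal (real CARD('n) / real (pmap_deg P)) \<le> c_inf (log_norm_pmap P) \<and>
            c_inf (log_norm_pmap P) \<le> n_over CARD('n) (lojasiewicz_inf P))"
  apply (intro conjI allI impI)
       apply (erule part1_pos)
      apply (erule part1_lower)
     apply (erule part1_upper)
    apply (rule ereal_less_eq(1))
   apply (rule part2_lower, erule conjunct1)
  apply (rule part2_upper, erule conjunct2)
  done

end
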